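(* Let $S$ be a semigroup and let $a,b\in S$ satisfy $a=aba$ and $b=bab$. Then \[(aSa,\cdot)\cong(aSb,\star_{aab})\cong(bSa,\star_{baa}).\]
   Context: For $u,v$ in a semigroup $S$, $uSv=\{uxv: x\in S\}$. For $c\in S$, $\star_c$ denotes the sandwich operation $x\star_c y=xcy$. $(T,\star_c)$ denotes the subset $T\subseteq S$ with the operation $\star_c$ (under which it is closed), and $(T,\cdot)$ denotes $T$ with the original operation of $S$. *)

theory Defs
  imports Main
begin

definition sandwich_set :: "'a::semigroup_mult \<Rightarrow> 'a \<Rightarrow> 'a set" where
  "sandwich_set u v = {u * x * v | x. True}"

definition sandwich_op :: "'a::semigroup_mult \<Rightarrow> 'a \<Rightarrow> 'a \<Rightarrow> 'a" where
  "sandwich_op c x y = x * c * y"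

definition magma_iso :: "'a set \<Rightarrow> ('a \<Rightarrow> 'a \<Rightarrow> 'a) \<Rightarrow> 'b set \<Rightarrow> ('b \<Rightarrow> 'b \<Rightarrow> 'b) \<Rightarrow> bool" where
  "magma_iso A opA B opB \<longleftrightarrow>
     (\<exists>f. bij_betw f A B \<and> (\<forall>x\<in>A. \<forall>y\<in>A. f (opA x y) = opB (f x) (f y)))"

end

theory Submission
  imports Defs
begin

theorem lemma2p5:
  fixes a b :: "'a::semigroup_mult"
  assumes "a = a * b * a" and "b = b * a * b"
  shows "magma_iso (sandwich_set a a) (*) (sandwich_set a b) (sandwich_op (a * a * b))
       \<and> magma_iso (sandwich_set a b) (sandwich_op (a * a * b)) (sandwich_set b a) (sandwich_op (b * a * a))"
proof -
  have A: "a * (b * a) = a" using assms(1) by (simp add: mult.assoc)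
  have B: "b * (a * b) = b" using assms(2) by (simp add: mult.assoc)
  have A': "a * (b * (a * t)) = a * t" for t
    by (metis A mult.assoc)
  have B': "b * (a * (b * t)) = b * t" for t
    by (metis B mult.assoc)
  note S = mult.assoc A A' B B'
  have 1: "magma_iso (sandwich_set a a) (*) (sandwich_set a b) (sandwich_op (a * a * b))"
    unfolding magma_iso_def
  proof (intro exI conjI ballI)
    show "bij_betw (\<lambda>x. x * b) (sandwich_set a a) (sandwich_set a b)"
    proof (rule bij_betw_byWitness[where f' = "\<lambda>y. y * a"])
      show "\<forall>x\<in>sandwich_set a a. x * b * a = x"
        by (auto simp: sandwich_set_def S; metis mult.assoc)
      show "\<forall>y\<in>sandwich_set a b. y * a * b = y"
        by (auto simp: sandwich_set_def S; metis mult.assoc)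
      show "(\<lambda>x. x * b) ` sandwich_set a a \<subseteq> sandwich_set a b"
        by (auto simp: sandwich_set_def S; metis mult.assoc)
      show "(\<lambda>y. y * a) ` sandwich_set a b \<subseteq> sandwich_set a a"
        by (auto simp: sandwich_set_def S; metis mult.assoc)
    qed
    fix x y assume "x \<in> sandwich_set a a" "y \<in> sandwich_set a a"
    then show "x * y * b = sandwich_op (a * a * b) (x * b) (y * b)"
      by (auto simp: sandwich_set_def sandwich_op_def S)
  qed
  have 2: "magma_iso (sandwich_set a b) (sandwich_op (a * a * b)) (sandwich_set b a) (sandwich_op (b * a * a))"
    unfolding magma_iso_def
  proof (intro exI conjI ballI)
    show "bij_betw (\<lambda>x. b * x * a) (sandwich_set a b) (sandwich_set b a)"
    proof (rule bij_betw_byWitness[where f' = "\<lambda>y. a * y * b"])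
      show "\<forall>x\<in>sandwich_set a b. a * (b * x * a) * b = x"
        by (auto simp: sandwich_set_def S; metis mult.assoc)
      show "\<forall>y\<in>sandwich_set b a. b * (a * y * b) * a = y"
        by (auto simp: sandwich_set_def S; metis mult.assoc)
      show "(\<lambda>x. b * x * a) ` sandwich_set a b \<subseteq> sandwich_set b a"
        by (auto simp: sandwich_set_def S; metis mult.assoc)
      show "(\<lambda>y. a * y * b) ` sandwich_set b a \<subseteq> sandwich_set a b"
        by (auto simp: sandwich_set_def S; metis mult.assoc)
    qed
    fix x y assume "x \<in> sandwich_set a b" "y \<in> sandwich_set a b"
    then show "b * sandwich_op (a * a * b) x y * a = sandwich_op (b * a * a) (b * x * a) (b * y * a)"
      by (auto simp: sandwich_set_def sandwich_op_def S)
  qed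
  from 1 2 show ?thesis ..
qed

end
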